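(* Let $\boldsymbol{\Theta}_{\mathrm{u}}\subseteq\Theta^N$ contain the true model $\boldsymbol{\theta}^*=(\theta_1^*,\ldots,\theta_N^* )$, let $\eta\le1/(N^2K^2H^2)$ and let UMT-PSR be run with margin $\beta^{(N)}=c\log\big(\mathcal{N}_\eta(\boldsymbol{\Theta}_{\mathrm{u}})NKH/\delta\big)$ for a suitable absolute constant $c$. Then with probability at least $1-\delta$, for every $k\in[K]$ and every $\hat{\boldsymbol{\theta}}=(\hat\theta_1,\ldots,\hat\theta_N)\in\boldsymbol{\mathcal{B}}_k$, \[\sum_{n\le N}\sum_{t\le k-1}\sum_{h\le H}\mathtt{D}_{\mathtt{H}}^2\big(\mathbb{P}^{\nu_h^{\pi^{n,t}}}_{\hat\theta_n},\mathbb{P}^{\nu_h^{\pi^{n,t}}}_{\theta_n^*}\big)\le2\beta^{(N)}.\]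
   Context: Setting: finite $\mathcal{O},\mathcal{A}$, horizon $H$; trajectories $\tau_H=(o_1,a_1,\ldots,o_H,a_H)$; policies $\pi$ with $a_h\sim\pi_h(\cdot\mid\tau_{h-1},o_h)$, $\Pi$ the set of all policies, $\pi(\tau_h)=\prod_{t\le h}\pi(a_t\mid o_t,\tau_{t-1})$; $\mathbb{P}^\pi_\theta$ is the trajectory law of model $\theta$ under $\pi$. $\Theta$ is the set of rank-$r$, $\gamma$-well-conditioned predictive state representations (PSRs); task $n$ has core action sequence sets $\mathcal{Q}_h^{n,A}\subset\mathcal{A}^{H-h}$. $\mathtt{D}_{\mathtt{TV}}(\mathbb{P},\mathbb{Q})=\sum_x|\mathbb{P}(x)-\mathbb{Q}(x)|$; $\mathtt{D}_{\mathtt{H}}^2(\mathbb{P},\mathbb{Q})=1-\sum_x\sqrt{\mathbb{P}(x)\mathbb{Q}(x)}$. Bracketing number: for $\mathbf{l},\mathbf{g}:(\mathcal{O}\times\mathcal{A})^H\to\mathbb{R}_+^N$, the bracket $[\mathbf{l},\mathbf{g}]$ is the set of class members $\mathbf{f}$ with $\mathbf{l}\le\mathbf{f}\le\mathbf{g}$; an $\eta$-bracket has $\max_i\max_{\pi_i}\sum_{\tau_H}|l_i-g_i|(\tau_H)\pi_i(\tau_H)<\eta$; $\mathcal{N}_\eta(\boldsymbol{\Theta}_{\mathrm{u}})$ is the minimal number of $\eta$-brackets covering $\{(\mathbb{P}_{\theta_1},\ldots,\mathbb{P}_{\theta_N}):\boldsymbol{\theta}\in\boldsymbol{\Theta}_{\mathrm{u}}\}$.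 Algorithm UMT-PSR: $\boldsymbol{\mathcal{B}}_1=\boldsymbol{\Theta}_{\mathrm{u}}$; for $k=1,\ldots,K$: $\boldsymbol{\pi}^k\in\arg\max_{\boldsymbol{\pi}\in\Pi^N}\max_{\boldsymbol{\theta},\boldsymbol{\theta}'\in\boldsymbol{\mathcal{B}}_k}\sum_n\mathtt{D}_{\mathtt{TV}}(\mathbb{P}^{\pi^n}_{\theta_n},\mathbb{P}^{\pi^n}_{\theta'_n})$; for each $(n,h)$ draw $\tau_H^{n,k,h}\sim\mathbb{P}^{\nu_h^{\pi^{n,k}}}_{\theta_n^*}$, where $\nu_h^{\pi^{n,k}}$ follows $\pi^{n,k}$ for $h-1$ steps, takes a uniform action at step $h$, then plays a uniformly random core action sequence from $\mathcal{Q}_h^{n,A}$; then $\boldsymbol{\mathcal{B}}_{k+1}=\{\boldsymbol{\theta}\in\boldsymbol{\Theta}_{\mathrm{u}}:\sum_{t\le k,h,n}\log\mathbb{P}^{\nu_h^{\pi^{n,t}}}_{\theta_n}(\tau_H^{n,t,h})\ge\max_{\boldsymbol{\theta}'\in\boldsymbol{\Theta}_{\mathrm{u}}}\sum_{t\le k,h,n}\log\mathbb{P}^{\nu_h^{\pi^{n,t}}}_{\theta'_n}(\tau_H^{n,t,h})-\beta^{(N)}\}\cap\boldsymbol{\mathcal{B}}_k$. *)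

theory Defs
  imports "HOL-Probability.Probability"
begin

(* Observations and actions are natural numbers ranging over finite carriers Obs and Act.
   Act trajectory prefix tau_h = (o_1,a_1,...,o_h,a_h) is a list of (ob,a) pairs in chronological order. *)
type_synonym hist = "(nat \<times> nat) list"

(* A (general sequential) model: law of the next observation o_{h+1} given the history tau_h. *)
type_synonym model = "hist \<Rightarrow> nat pmf"

(* A policy: law of a_h given (tau_{h-1}, o_h). *)
type_synonym policy = "hist \<Rightarrow> nat \<Rightarrow> nat pmf"

definition trajs :: "nat set \<Rightarrow> nat set \<Rightarrow> nat \<Rightarrow> hist set" where
  "trajs Obs Act H = {xs. length xs = H \<and> set xs \<subseteq> Obs \<times> Act}"

definition policies :: "nat set \<Rightarrow> policy set" where
  "policies Act = {\<pi>. \<forall>hs ob. set_pmf (\<pi> hs ob) \<subseteq> Act}"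

definition valid_models :: "nat set \<Rightarrow> model set" where
  "valid_models Obs = {\<theta>. \<forall>hs. set_pmf (\<theta> hs) \<subseteq> Obs}"

fun traj :: "nat \<Rightarrow> model \<Rightarrow> policy \<Rightarrow> hist \<Rightarrow> hist pmf" where
  "traj 0 \<theta> \<pi> hs = return_pmf hs"
| "traj (Suc m) \<theta> \<pi> hs =
     bind_pmf (\<theta> hs) (\<lambda>ob. bind_pmf (\<pi> hs ob) (\<lambda>a. traj m \<theta> \<pi> (hs @ [(ob, a)])))"

definition Plaw :: "nat \<Rightarrow> model \<Rightarrow> policy \<Rightarrow> hist pmf" where
  "Plaw H \<theta> \<pi> = traj H \<theta> \<pi> []"

definition obsprob :: "model \<Rightarrow> hist \<Rightarrow> real" where
  "obsprob \<theta> \<tau> = (\<Prod>t<length \<tau>. pmf (\<theta> (take t \<tau>)) (fst (\<tau> ! t)))"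

definition polprob :: "policy \<Rightarrow> hist \<Rightarrow> real" where
  "polprob \<pi> \<tau> = (\<Prod>t<length \<tau>. pmf (\<pi> (take t \<tau>) (fst (\<tau> ! t))) (snd (\<tau> ! t)))"

definition DTV :: "nat set \<Rightarrow> nat set \<Rightarrow> nat \<Rightarrow> hist pmf \<Rightarrow> hist pmf \<Rightarrow> real" where
  "DTV Obs Act H p q = (\<Sum>x\<in>trajs Obs Act H. \<bar>pmf p x - pmf q x\<bar>)"

definition DH2 :: "nat set \<Rightarrow> nat set \<Rightarrow> nat \<Rightarrow> hist pmf \<Rightarrow> hist pmf \<Rightarrow> real" where
  "DH2 Obs Act H p q = 1 - (\<Sum>x\<in>trajs Obs Act H. sqrt (pmf p x * pmf q x))"

(* Exploration policy nu_h^pi (steps are 1-indexed; the current step is length hs + 1):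
   follow pi for steps < h, uniform action at step h, then at steps > h play the next action of a
   core action sequence drawn uniformly from Q (realised as the conditional law of the next
   action given the already played exploration actions). *)
definition nu :: "nat set \<Rightarrow> nat list set \<Rightarrow> nat \<Rightarrow> policy \<Rightarrow> policy" where
  "nu Act Q h \<pi> hs ob =
     (let t = length hs + 1 in
      if t < h then \<pi> hs ob
      else if t = h then pmf_of_set Act
      else (let played = map snd (drop h hs);
                C = {q\<in>Q. take (t - h - 1) q = played}
            in if C = {} then pmf_of_set Act
               else map_pmf (\<lambda>q. q ! (t - h - 1)) (pmf_of_set C)))"

definition is_eta_bracket ::
  "nat set \<Rightarrow> nat set \<Rightarrow> nat \<Rightarrow> nat \<Rightarrow> real \<Rightarrow>
   ((nat \<Rightarrow> hist \<Rightarrow> real) \<times> (nat \<Rightarrow> hist \<Rightarrow> real)) \<Rightarrow> bool" where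
  "is_eta_bracket Obs Act H N \<eta> b =
     ((\<forall>i<N. \<forall>\<tau>\<in>trajs Obs Act H. 0 \<le> fst b i \<tau> \<and> 0 \<le> snd b i \<tau>) \<and>
      (\<forall>i<N. \<forall>\<pi>\<in>policies Act.
         (\<Sum>\<tau>\<in>trajs Obs Act H. \<bar>fst b i \<tau> - snd b i \<tau>\<bar> * polprob \<pi> \<tau>) < \<eta>))"

definition in_bracket ::
  "nat set \<Rightarrow> nat set \<Rightarrow> nat \<Rightarrow> nat \<Rightarrow>
   ((nat \<Rightarrow> hist \<Rightarrow> real) \<times> (nat \<Rightarrow> hist \<Rightarrow> real)) \<Rightarrow> (nat \<Rightarrow> model) \<Rightarrow> bool" where
  "in_bracket Obs Act H N b \<theta> =
     (\<forall>i<N. \<forall>\<tau>\<in>trajs Obs Act H. fst b i \<tau> \<le> obsprob (\<theta> i) \<tau> \<and> obsprob (\<theta> i) \<tau> \<le> snd b i \<tau>)"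

definition bracket_cover ::
  "nat set \<Rightarrow> nat set \<Rightarrow> nat \<Rightarrow> nat \<Rightarrow> real \<Rightarrow> (nat \<Rightarrow> model) set \<Rightarrow> nat \<Rightarrow> bool" where
  "bracket_cover Obs Act H N \<eta> Tu m =
     (\<exists>brs. length brs = m \<and> (\<forall>b\<in>set brs. is_eta_bracket Obs Act H N \<eta> b) \<and>
            (\<forall>\<theta>\<in>Tu. \<exists>b\<in>set brs. in_bracket Obs Act H N b \<theta>))"

definition bracketing_number ::
  "nat set \<Rightarrow> nat set \<Rightarrow> nat \<Rightarrow> nat \<Rightarrow> real \<Rightarrow> (nat \<Rightarrow> model) set \<Rightarrow> nat" where
  "bracketing_number Obs Act H N \<eta> Tu = (LEAST m. bracket_cover Obs Act H N \<eta> Tu m)"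

(* A record of one round t: the policy tuple pi^t and the data tau^{n,t,h} indexed by (n,h). *)
type_synonym round_rec = "(nat \<Rightarrow> policy) \<times> (nat \<times> nat \<Rightarrow> hist)"

definition elog :: "real \<Rightarrow> ereal" where
  "elog x = (if 0 < x then ereal (ln x) else -\<infinity>)"

definition loglik ::
  "nat set \<Rightarrow> nat \<Rightarrow> nat \<Rightarrow> (nat \<Rightarrow> nat \<Rightarrow> nat list set) \<Rightarrow> (nat \<Rightarrow> model) \<Rightarrow> round_rec list \<Rightarrow> ereal" where
  "loglik Act H N Qc \<theta> recs =
     sum_list (map (\<lambda>r. \<Sum>n<N. \<Sum>h\<in>{1..H}.
        elog (pmf (Plaw H (\<theta> n) (nu Act (Qc n h) h (fst r n))) (snd r (n, h)))) recs)"

(* Bset j recs = B_{j+1}, computed from the first j records. *)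
fun Bset ::
  "nat set \<Rightarrow> nat \<Rightarrow> nat \<Rightarrow> (nat \<Rightarrow> nat \<Rightarrow> nat list set) \<Rightarrow> (nat \<Rightarrow> model) set \<Rightarrow> real \<Rightarrow>
   round_rec list \<Rightarrow> nat \<Rightarrow> (nat \<Rightarrow> model) set" where
  "Bset Act H N Qc Tu \<beta> recs 0 = Tu"
| "Bset Act H N Qc Tu \<beta> recs (Suc j) =
     {\<theta>\<in>Tu. loglik Act H N Qc \<theta> (take (Suc j) recs)
              \<ge> (SUP \<theta>'\<in>Tu. loglik Act H N Qc \<theta>' (take (Suc j) recs)) - ereal \<beta>}
     \<inter> Bset Act H N Qc Tu \<beta> recs j"

definition sel_obj ::
  "nat set \<Rightarrow> nat set \<Rightarrow> nat \<Rightarrow> nat \<Rightarrow> (nat \<Rightarrow> model) set \<Rightarrow> (nat \<Rightarrow> policy) \<Rightarrow> real" where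
  "sel_obj Obs Act H N B \<pi>s =
     (SUP p\<in>B \<times> B. \<Sum>n<N. DTV Obs Act H (Plaw H (fst p n) (\<pi>s n)) (Plaw H (snd p n) (\<pi>s n)))"

definition policy_tuples :: "nat set \<Rightarrow> nat \<Rightarrow> (nat \<Rightarrow> policy) set" where
  "policy_tuples Act N = {\<pi>s. \<forall>n<N. \<pi>s n \<in> policies Act}"

definition model_tuples :: "model set \<Rightarrow> nat \<Rightarrow> (nat \<Rightarrow> model) set" where
  "model_tuples Th N = {\<theta>. \<forall>n<N. \<theta> n \<in> Th}"

definition valid_selection ::
  "nat set \<Rightarrow> nat set \<Rightarrow> nat \<Rightarrow> nat \<Rightarrow> ((nat \<Rightarrow> model) set \<Rightarrow> (nat \<Rightarrow> policy)) \<Rightarrow> bool" where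
  "valid_selection Obs Act H N sel =
     (\<forall>B. sel B \<in> policy_tuples Act N \<and>
          ((\<exists>\<pi>s\<in>policy_tuples Act N. \<forall>\<pi>s'\<in>policy_tuples Act N. sel_obj Obs Act H N B \<pi>s' \<le> sel_obj Obs Act H N B \<pi>s)
           \<longrightarrow> (\<forall>\<pi>s'\<in>policy_tuples Act N. sel_obj Obs Act H N B \<pi>s' \<le> sel_obj Obs Act H N B (sel B))))"

fun umt_run ::
  "nat set \<Rightarrow> nat \<Rightarrow> nat \<Rightarrow> (nat \<Rightarrow> nat \<Rightarrow> nat list set) \<Rightarrow> (nat \<Rightarrow> model) set \<Rightarrow> real \<Rightarrow>
   ((nat \<Rightarrow> model) set \<Rightarrow> (nat \<Rightarrow> policy)) \<Rightarrow> (nat \<Rightarrow> model) \<Rightarrow> nat \<Rightarrow> round_rec list pmf" where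
  "umt_run Act H N Qc Tu \<beta> sel thstar 0 = return_pmf []"
| "umt_run Act H N Qc Tu \<beta> sel thstar (Suc j) =
     bind_pmf (umt_run Act H N Qc Tu \<beta> sel thstar j) (\<lambda>recs.
       (let \<pi>s = sel (Bset Act H N Qc Tu \<beta> recs j) in
        map_pmf (\<lambda>D. recs @ [(\<pi>s, D)])
          (Pi_pmf ({..<N} \<times> {1..H}) []
             (\<lambda>(n, h). Plaw H (thstar n) (nu Act (Qc n h) h (\<pi>s n))))))"

end

theory Submission
  imports Defs
begin

definition stepf :: "model \<Rightarrow> policy \<Rightarrow> hist \<Rightarrow> nat \<Rightarrow> real" where
  "stepf \<theta> \<pi> \<tau> t = pmf (\<theta> (take t \<tau>)) (fst (\<tau>!t)) * pmf (\<pi> (take t \<tau>) (fst (\<tau>!t))) (snd (\<tau>!t))"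

lemma pmf_traj:
  "pmf (traj m \<theta> \<pi> hs) \<tau> = (if length \<tau> = length hs + m \<and> take (length hs) \<tau> = hs
     then (\<Prod>t\<in>{length hs..<length \<tau>}. stepf \<theta> \<pi> \<tau> t) else 0)"
proof (induction m arbitrary: hs)
  case 0
  then show ?case by (auto simp: pmf_return indicator_def)
next
  case (Suc m)
  define L where "L = length hs"
  show ?case
  proof (cases "length \<tau> = L + Suc m \<and> take L \<tau> = hs")
    case True
    define o0 where "o0 = fst (\<tau>!L)"
    define a0 where "a0 = snd (\<tau>!L)"
    have tk: "take (Suc L) \<tau> = hs @ [(o0, a0)]"
      using True by (simp add: take_Suc_conv_app_nth o0_def a0_def)
    have inner: "pmf (traj m \<theta> \<pi> (hs @ [(ob, a)])) \<tau> = (if ob = o0 \<and> a = a0 then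
        (\<Prod>t\<in>{Suc L..<length \<tau>}. stepf \<theta> \<pi> \<tau> t) else 0)" for ob a
    proof (cases "ob = o0 \<and> a = a0")
      case True2: True
      then show ?thesis using Suc.IH[of "hs @ [(ob,a)]"] tk True by (simp add: L_def)
    next
      case False
      have "take (Suc L) \<tau> \<noteq> hs @ [(ob,a)]" using tk False by auto
      then have "pmf (traj m \<theta> \<pi> (hs @ [(ob, a)])) \<tau> = 0" using Suc.IH[of "hs @ [(ob,a)]"] by (simp add: L_def)
      then show ?thesis using False by (simp only: if_False)
    qed
    have "pmf (traj (Suc m) \<theta> \<pi> hs) \<tau> =
       (\<integral>ob. (\<integral>a. pmf (traj m \<theta> \<pi> (hs @ [(ob, a)])) \<tau> \<partial>\<pi> hs ob) \<partial>\<theta> hs)"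
      by (simp add: pmf_bind)
    also have "\<dots> = (\<integral>ob. (if ob = o0 then pmf (\<pi> hs o0) a0 * (\<Prod>t\<in>{Suc L..<length \<tau>}. stepf \<theta> \<pi> \<tau> t) else 0) \<partial>\<theta> hs)"
      apply (rule Bochner_Integration.integral_cong[OF refl])
      apply (subst integral_measure_pmf_real[where A="{a0}"])
        apply (auto simp: inner split: if_splits)
      done
    also have "\<dots> = pmf (\<theta> hs) o0 * (pmf (\<pi> hs o0) a0 * (\<Prod>t\<in>{Suc L..<length \<tau>}. stepf \<theta> \<pi> \<tau> t))"
      by (subst integral_measure_pmf_real[where A="{o0}"]) (auto split: if_splits)
    also have "\<dots> = (\<Prod>t\<in>{L..<length \<tau>}. stepf \<theta> \<pi> \<tau> t)"
    proof -
      have "L < length \<tau>" using True by simp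
      then have "{L..<length \<tau>} = insert L {Suc L..<length \<tau>}" by auto
      moreover have "stepf \<theta> \<pi> \<tau> L = pmf (\<theta> hs) o0 * pmf (\<pi> hs o0) a0"
        using True by (simp add: stepf_def o0_def a0_def)
      ultimately show ?thesis by simp
    qed
    finally show ?thesis using True by (simp add: L_def)
  next
    case False
    have inner: "pmf (traj m \<theta> \<pi> (hs @ [(ob, a)])) \<tau> = 0" for ob a
    proof -
      have "\<not> (length \<tau> = length (hs @ [(ob,a)]) + m \<and> take (length (hs @ [(ob,a)])) \<tau> = hs @ [(ob,a)])"
      proof
        assume A: "length \<tau> = length (hs @ [(ob,a)]) + m \<and> take (length (hs @ [(ob,a)])) \<tau> = hs @ [(ob,a)]"
        then have "take L (take (Suc L) \<tau>) = hs" by (simp add: L_def)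
        then have "take L \<tau> = hs" by (simp add: min_def)
        with A False show False by (simp add: L_def)
      qed
      then show ?thesis by (subst Suc.IH) (rule if_not_P)
    qed
    have z: "pmf (traj (Suc m) \<theta> \<pi> hs) \<tau> = 0"
      by (simp add: pmf_bind inner)
    have c: "\<not>(length \<tau> = length hs + Suc m \<and> take (length hs) \<tau> = hs)" using False L_def by simp
    show ?thesis by (subst if_not_P[OF c]) (rule z)
  qed
qed

lemma pmf_Plaw:
  "pmf (Plaw H \<theta> \<pi>) \<tau> = (if length \<tau> = H then obsprob \<theta> \<tau> * polprob \<pi> \<tau> else 0)"
  unfolding Plaw_def pmf_traj obsprob_def polprob_def
  by (simp add: stepf_def prod.distrib atLeast0LessThan)


lemma run_support:
  assumes "recs \<in> set_pmf (umt_run Act H N Qc Tu \<beta> sel thstar m)"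
  shows "length recs = m \<and> (\<forall>t<m. fst (recs!t) \<in> range sel) \<and>
    (\<forall>t<m. \<forall>n<N. \<forall>h\<in>{1..H}. snd (recs!t) (n,h) \<in> set_pmf (Plaw H (thstar n) (nu Act (Qc n h) h (fst (recs!t) n))))"
  using assms
proof (induction m arbitrary: recs)
  case 0
  then show ?case by simp
next
  case (Suc m)
  from Suc.prems obtain rs D where rs: "rs \<in> set_pmf (umt_run Act H N Qc Tu \<beta> sel thstar m)"
    and D: "D \<in> set_pmf (Pi_pmf ({..<N} \<times> {1..H}) []
             (\<lambda>(n, h). Plaw H (thstar n) (nu Act (Qc n h) h (sel (Bset Act H N Qc Tu \<beta> rs m) n))))"
    and recs: "recs = rs @ [(sel (Bset Act H N Qc Tu \<beta> rs m), D)]"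
    by (auto simp: Let_def)
  note IH = Suc.IH[OF rs]
  have Dp: "\<forall>n<N. \<forall>h\<in>{1..H}. D (n,h) \<in> set_pmf (Plaw H (thstar n) (nu Act (Qc n h) h (sel (Bset Act H N Qc Tu \<beta> rs m) n)))"
    using D by (auto simp: set_Pi_pmf PiE_dflt_def)
  show ?case
  proof (intro conjI allI impI ballI)
    show "length recs = Suc m" using IH recs by simp
  next
    fix t assume "t < Suc m"
    then show "fst (recs!t) \<in> range sel" using IH recs by (cases "t < m") (auto simp: nth_append)
  next
    fix t n h assume "t < Suc m" "n < N" "h \<in> {1..H}"
    then show "snd (recs!t) (n,h) \<in> set_pmf (Plaw H (thstar n) (nu Act (Qc n h) h (fst (recs!t) n)))"
      using IH recs Dp by (cases "t < m") (auto simp: nth_append)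
  qed
qed


lemma finite_trajs: "finite Obs \<Longrightarrow> finite Act \<Longrightarrow> finite (trajs Obs Act H)"
  unfolding trajs_def
  by (rule finite_subset[OF _ finite_lists_length_eq[of "Obs \<times> Act" H]]) auto

lemma sqrt_amgm:
  fixes x y s :: real
  assumes "0 \<le> x" "0 \<le> y" "0 < s"
  shows "sqrt (x * y) \<le> (x / s + s * y) / 2"
proof -
  have "sqrt (x * y) = sqrt ((x / s) * (s * y))"
    using assms by simp
  also have "\<dots> \<le> (x / s + s * y) / 2"
    by (rule arith_geo_mean_sqrt) (use assms in auto)
  finally show ?thesis .
qed

lemma hell_term:
  fixes T :: "'a set" and P G Ps :: "'a \<Rightarrow> real"
  assumes "finite T" "\<And>x. x \<in> T \<Longrightarrow> 0 \<le> P x" "\<And>x. x \<in> T \<Longrightarrow> P x \<le> G x"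
    "\<And>x. x \<in> T \<Longrightarrow> 0 \<le> Ps x" "(\<Sum>x\<in>T. Ps x) \<le> 1" "(\<Sum>x\<in>T. G x - P x) \<le> \<eta>" "0 < \<eta>"
  shows "(\<Sum>x\<in>T. sqrt (G x * Ps x)) \<le> (\<Sum>x\<in>T. sqrt (P x * Ps x)) + sqrt \<eta>"
proof -
  define s where "s = sqrt \<eta>"
  have s: "0 < s" "s * s = \<eta>" using assms(7) by (auto simp: s_def)
  have "(\<Sum>x\<in>T. sqrt (G x * Ps x)) \<le> (\<Sum>x\<in>T. sqrt (P x * Ps x) + ((G x - P x) / s + s * Ps x) / 2)"
  proof (rule sum_mono)
    fix x assume x: "x \<in> T"
    have "sqrt (G x * Ps x) = sqrt (P x * Ps x + (G x - P x) * Ps x)" by (simp add: algebra_simps)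
    also have "\<dots> \<le> sqrt (P x * Ps x) + sqrt ((G x - P x) * Ps x)"
      by (rule sqrt_add_le_add_sqrt) (use assms x in auto)
    also have "sqrt ((G x - P x) * Ps x) \<le> ((G x - P x) / s + s * Ps x) / 2"
      by (rule sqrt_amgm) (use assms x s in auto)
    finally show "sqrt (G x * Ps x) \<le> sqrt (P x * Ps x) + ((G x - P x) / s + s * Ps x) / 2" by simp
  qed
  also have "\<dots> = (\<Sum>x\<in>T. sqrt (P x * Ps x)) + ((\<Sum>x\<in>T. G x - P x) / s + s * (\<Sum>x\<in>T. Ps x)) / 2"
    by (simp add: sum.distrib sum_divide_distrib[symmetric] sum_distrib_left add_divide_distrib)
  also have "\<dots> \<le> (\<Sum>x\<in>T. sqrt (P x * Ps x)) + (\<eta> / s + s * 1) / 2"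
    using assms s by (intro add_left_mono divide_right_mono add_mono mult_left_mono divide_right_mono) auto
  also have "\<eta> / s = s" using s by (metis nonzero_mult_div_cancel_right less_irrefl)
  finally show ?thesis by (simp add: s_def)
qed

lemma nu_valid:
  assumes "finite Act" "Act \<noteq> {}" "\<pi> \<in> policies Act" "Q \<subseteq> {q. length q = H - h \<and> set q \<subseteq> Act}"
    "length hs < H"
  shows "set_pmf (nu Act Q h \<pi> hs ob) \<subseteq> Act"
proof -
  have finQ: "finite Q"
    by (rule finite_subset[OF _ finite_lists_length_eq[OF assms(1), of "H - h"]]) (use assms(4) in auto)
  define t where "t = length hs + 1"
  define C where "C = {q\<in>Q. take (t - h - 1) q = map snd (drop h hs)}"
  have e: "nu Act Q h \<pi> hs ob = (if t < h then \<pi> hs ob else if t = h then pmf_of_set Act else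
     (if C = {} then pmf_of_set Act else map_pmf (\<lambda>q. q ! (t-h-1)) (pmf_of_set C)))"
    unfolding nu_def Let_def t_def C_def by simp
  have finC: "finite C" using finQ by (simp add: C_def)
  have "set_pmf (map_pmf (\<lambda>q. q ! (t - h - 1)) (pmf_of_set C)) \<subseteq> Act" if Cne: "C \<noteq> {}" "\<not> t < h" "t \<noteq> h"
  proof
    fix x assume "x \<in> set_pmf (map_pmf (\<lambda>q. q ! (t - h - 1)) (pmf_of_set C))"
    then obtain q where q: "q \<in> C" "x = q ! (t - h - 1)" using Cne(1) finC by (auto simp: set_pmf_of_set simp del: One_nat_def)
    have "length q = H - h" "set q \<subseteq> Act" using q assms(4) by (auto simp: C_def)
    moreover have "t - h - 1 < H - h" using Cne assms(5) by (simp add: t_def)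
    ultimately show "x \<in> Act" using q by (auto simp: nth_mem subsetD)
  qed
  then show ?thesis using assms(1,2,3) unfolding e by (auto simp: policies_def)
qed

definition nut :: "nat set \<Rightarrow> nat \<Rightarrow> policy \<Rightarrow> policy" where
  "nut Act H \<pi> hs ob = (if length hs < H then \<pi> hs ob else pmf_of_set Act)"

lemma nut_policy:
  assumes "finite Act" "Act \<noteq> {}" "\<And>hs ob. length hs < H \<Longrightarrow> set_pmf (\<pi> hs ob) \<subseteq> Act"
  shows "nut Act H \<pi> \<in> policies Act"
  using assms by (auto simp: nut_def policies_def)

lemma polprob_nut: "length \<tau> = H \<Longrightarrow> polprob (nut Act H \<pi>) \<tau> = polprob \<pi> \<tau>"
  unfolding polprob_def by (intro prod.cong) (auto simp: nut_def)

lemma Plaw_pos_trajs: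
  assumes "\<theta> \<in> valid_models Obs" "\<And>hs ob. length hs < H \<Longrightarrow> set_pmf (\<pi> hs ob) \<subseteq> Act"
    "pmf (Plaw H \<theta> \<pi>) \<tau> \<noteq> 0"
  shows "\<tau> \<in> trajs Obs Act H"
proof -
  have len: "length \<tau> = H" and nz: "obsprob \<theta> \<tau> \<noteq> 0" "polprob \<pi> \<tau> \<noteq> 0"
    using assms(3) by (auto simp: pmf_Plaw split: if_splits)
  have "\<tau> ! i \<in> Obs \<times> Act" if i: "i < length \<tau>" for i
  proof -
    have "pmf (\<theta> (take i \<tau>)) (fst (\<tau> ! i)) \<noteq> 0" using nz(1) i by (auto simp: obsprob_def)
    then have "fst (\<tau>!i) \<in> Obs" using assms(1) by (auto simp: valid_models_def set_pmf_eq)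
    moreover have "pmf (\<pi> (take i \<tau>) (fst (\<tau> ! i))) (snd (\<tau> ! i)) \<noteq> 0" using nz(2) i by (auto simp: polprob_def)
    then have "snd (\<tau>!i) \<in> Act" using assms(2)[of "take i \<tau>" "fst (\<tau>!i)"] i len
      by (auto simp: set_pmf_eq)
    ultimately show ?thesis by (simp add: mem_Times_iff)
  qed
  then show ?thesis using len unfolding trajs_def by (metis (mono_tags, lifting) in_set_conv_nth mem_Collect_eq subsetI)
qed


lemma F_exp_le: "(F::real) * exp (1 - F) \<le> 1"
proof -
  have "F \<le> exp (F - 1)" using exp_ge_add_one_self[of "F - 1"] by simp
  then have "F * exp (1 - F) \<le> exp (F - 1) * exp (1 - F)" by (simp add: mult_right_mono)
  also have "\<dots> = 1" by (simp add: exp_add[symmetric])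
  finally show ?thesis .
qed

lemma ereal_sum_minf:
  fixes f :: "'a \<Rightarrow> ereal"
  assumes "finite A" "i \<in> A" "f i = -\<infinity>" "\<And>x. x \<in> A \<Longrightarrow> f x \<noteq> \<infinity>"
  shows "sum f A = -\<infinity>"
proof -
  have "\<exists>j\<in>A. \<bar>f j\<bar> = \<infinity>" using assms(2,3) by (intro bexI[of _ i]) auto
  then have "\<bar>sum f A\<bar> = \<infinity>" using assms(1) sum_Inf[of f A] by simp
  moreover have "sum f A \<noteq> \<infinity>" using assms by (subst sum_Pinfty) auto
  ultimately show ?thesis by (cases "sum f A") auto
qed

lemma ereal_sum_not_inf:
  fixes f :: "'a \<Rightarrow> ereal"
  assumes "\<And>x. x \<in> A \<Longrightarrow> f x \<noteq> \<infinity>"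
  shows "sum f A \<noteq> \<infinity>"
  using assms by (subst sum_Pinfty) auto

lemma elog_not_inf: "elog x \<noteq> \<infinity>"
  by (simp add: elog_def)

lemma loglik_nth:
  "loglik Act H N Qc \<theta> rs = (\<Sum>t<length rs. \<Sum>n<N. \<Sum>h\<in>{1..H}.
        elog (pmf (Plaw H (\<theta> n) (nu Act (Qc n h) h (fst (rs!t) n))) (snd (rs!t) (n, h))))"
  unfolding loglik_def sum_list_sum_nth by (simp add: atLeast0LessThan)

lemma loglik_eq:
  assumes "\<And>t n h. t < length rs \<Longrightarrow> n < N \<Longrightarrow> h \<in> {1..H} \<Longrightarrow>
     0 < pmf (Plaw H (\<theta> n) (nu Act (Qc n h) h (fst (rs!t) n))) (snd (rs!t) (n, h))"
  shows "loglik Act H N Qc \<theta> rs = ereal (\<Sum>t<length rs. \<Sum>n<N. \<Sum>h\<in>{1..H}.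
        ln (pmf (Plaw H (\<theta> n) (nu Act (Qc n h) h (fst (rs!t) n))) (snd (rs!t) (n, h))))"
  unfolding loglik_nth sum_ereal[symmetric]
  by (intro sum.cong refl) (simp add: elog_def assms)

lemma loglik_pos:
  assumes "loglik Act H N Qc \<theta> rs \<noteq> -\<infinity>" "t < length rs" "n < N" "h \<in> {1..H}"
  shows "0 < pmf (Plaw H (\<theta> n) (nu Act (Qc n h) h (fst (rs!t) n))) (snd (rs!t) (n, h))"
proof (rule ccontr)
  assume "\<not> ?thesis"
  then have z: "elog (pmf (Plaw H (\<theta> n) (nu Act (Qc n h) h (fst (rs!t) n))) (snd (rs!t) (n, h))) = -\<infinity>"
    by (simp add: elog_def)
  have s1: "(\<Sum>h\<in>{1..H}. elog (pmf (Plaw H (\<theta> n) (nu Act (Qc n h) h (fst (rs!t) n))) (snd (rs!t) (n, h)))) = -\<infinity>"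
    by (rule ereal_sum_minf[where i=h, OF _ assms(4)]) (use z in \<open>auto simp: elog_not_inf\<close>)
  have s2: "(\<Sum>n<N. \<Sum>h\<in>{1..H}. elog (pmf (Plaw H (\<theta> n) (nu Act (Qc n h) h (fst (rs!t) n))) (snd (rs!t) (n, h)))) = -\<infinity>"
    by (rule ereal_sum_minf[of _ n]) (use assms s1 in \<open>auto intro!: ereal_sum_not_inf simp: elog_not_inf\<close>)
  have "loglik Act H N Qc \<theta> rs = -\<infinity>"
    unfolding loglik_nth
    by (rule ereal_sum_minf[of _ t]) (use assms s2 in \<open>auto intro!: ereal_sum_not_inf simp: elog_not_inf\<close>)
  with assms(1) show False by simp
qed

context
  fixes Obs Act :: "nat set" and H N :: nat and Qc :: "nat \<Rightarrow> nat \<Rightarrow> nat list set"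
    and thstar :: "nat \<Rightarrow> model" and g :: "nat \<Rightarrow> hist \<Rightarrow> real"
begin

definition Pst :: "nat \<Rightarrow> nat \<Rightarrow> policy \<Rightarrow> hist \<Rightarrow> real" where
  "Pst n h \<pi> \<tau> = pmf (Plaw H (thstar n) (nu Act (Qc n h) h \<pi>)) \<tau>"

definition ghat :: "nat \<Rightarrow> nat \<Rightarrow> policy \<Rightarrow> hist \<Rightarrow> real" where
  "ghat n h \<pi> \<tau> = (if \<tau> \<in> trajs Obs Act H then g n \<tau> * polprob (nu Act (Qc n h) h \<pi>) \<tau> else 0)"

definition Fb :: "nat \<Rightarrow> nat \<Rightarrow> policy \<Rightarrow> real" where
  "Fb n h \<pi> = (\<Sum>\<tau>\<in>trajs Obs Act H. sqrt (ghat n h \<pi> \<tau> * Pst n h \<pi> \<tau>))"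

definition wfac :: "nat \<Rightarrow> nat \<Rightarrow> policy \<Rightarrow> hist \<Rightarrow> real" where
  "wfac n h \<pi> \<tau> = sqrt (ghat n h \<pi> \<tau> / Pst n h \<pi> \<tau>) * exp (1 - Fb n h \<pi>)"

definition Vr :: "round_rec \<Rightarrow> ennreal" where
  "Vr r = (\<Prod>x\<in>{..<N} \<times> {1..H}. ennreal (wfac (fst x) (snd x) (fst r (fst x)) (snd r x)))"

definition Wr :: "round_rec list \<Rightarrow> ennreal" where
  "Wr recs = prod_list (map Vr recs)"

lemma Wr_append: "Wr (xs @ [x]) = Wr xs * Vr x"
  by (simp add: Wr_def)

lemma ghat_nonneg:
  assumes "\<And>\<tau>. \<tau> \<in> trajs Obs Act H \<Longrightarrow> 0 \<le> g n \<tau>"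
  shows "0 \<le> ghat n h \<pi> \<tau>"
  using assms by (auto simp: ghat_def polprob_def intro!: mult_nonneg_nonneg prod_nonneg)

lemma factor_exp:
  assumes fin: "finite Obs" "finite Act" and gnn: "\<And>\<tau>. \<tau> \<in> trajs Obs Act H \<Longrightarrow> 0 \<le> g n \<tau>"
  shows "(\<integral>\<^sup>+\<tau>. ennreal (wfac n h \<pi> \<tau>) \<partial>measure_pmf (Plaw H (thstar n) (nu Act (Qc n h) h \<pi>))) \<le> 1"
proof -
  let ?T = "trajs Obs Act H"
  let ?M = "Plaw H (thstar n) (nu Act (Qc n h) h \<pi>)"
  have finT: "finite ?T" using fin by (rule finite_trajs)
  have "(\<integral>\<^sup>+\<tau>. ennreal (wfac n h \<pi> \<tau>) \<partial>measure_pmf ?M) = (\<Sum>\<tau>\<in>?T. ennreal (wfac n h \<pi> \<tau>) * pmf ?M \<tau>)"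
    by (rule nn_integral_measure_pmf_support[OF finT]) (auto simp: wfac_def ghat_def)
  also have "\<dots> = (\<Sum>\<tau>\<in>?T. ennreal (sqrt (ghat n h \<pi> \<tau> * Pst n h \<pi> \<tau>) * exp (1 - Fb n h \<pi>)))"
  proof (rule sum.cong[OF refl])
    fix \<tau> assume "\<tau> \<in> ?T"
    have P0: "0 \<le> Pst n h \<pi> \<tau>" by (simp add: Pst_def)
    have g0: "0 \<le> ghat n h \<pi> \<tau>" by (rule ghat_nonneg[OF gnn])
    have "sqrt (ghat n h \<pi> \<tau> / Pst n h \<pi> \<tau>) * Pst n h \<pi> \<tau> = sqrt (ghat n h \<pi> \<tau> * Pst n h \<pi> \<tau>)"
    proof (cases "Pst n h \<pi> \<tau> = 0")
      case False
      then have "Pst n h \<pi> \<tau> = sqrt (Pst n h \<pi> \<tau> * Pst n h \<pi> \<tau>)" using P0 by simp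
      then have "sqrt (ghat n h \<pi> \<tau> / Pst n h \<pi> \<tau>) * Pst n h \<pi> \<tau> =
          sqrt (ghat n h \<pi> \<tau> / Pst n h \<pi> \<tau> * (Pst n h \<pi> \<tau> * Pst n h \<pi> \<tau>))"
        by (metis real_sqrt_mult)
      also have "\<dots> = sqrt (ghat n h \<pi> \<tau> * Pst n h \<pi> \<tau>)" using False by simp
      finally show ?thesis .
    qed simp
    then show "ennreal (wfac n h \<pi> \<tau>) * ennreal (pmf ?M \<tau>) =
        ennreal (sqrt (ghat n h \<pi> \<tau> * Pst n h \<pi> \<tau>) * exp (1 - Fb n h \<pi>))"
      using P0 g0 by (simp add: wfac_def Pst_def ennreal_mult'[symmetric] mult_ac)
  qed
  also have "\<dots> = ennreal (\<Sum>\<tau>\<in>?T. sqrt (ghat n h \<pi> \<tau> * Pst n h \<pi> \<tau>) * exp (1 - Fb n h \<pi>))"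
    by (rule sum_ennreal) (use ghat_nonneg[OF gnn] in \<open>auto simp: Pst_def\<close>)
  also have "(\<Sum>\<tau>\<in>?T. sqrt (ghat n h \<pi> \<tau> * Pst n h \<pi> \<tau>) * exp (1 - Fb n h \<pi>)) = Fb n h \<pi> * exp (1 - Fb n h \<pi>)"
    by (simp add: Fb_def sum_distrib_right)
  also have "ennreal \<dots> \<le> 1" using F_exp_le by simp
  finally show ?thesis .
qed

lemma round_exp:
  assumes fin: "finite Obs" "finite Act" and gnn: "\<And>n \<tau>. n < N \<Longrightarrow> \<tau> \<in> trajs Obs Act H \<Longrightarrow> 0 \<le> g n \<tau>"
  shows "(\<integral>\<^sup>+D. Vr (\<pi>s, D) \<partial>measure_pmf (Pi_pmf ({..<N} \<times> {1..H}) []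
             (\<lambda>(n, h). Plaw H (thstar n) (nu Act (Qc n h) h (\<pi>s n))))) \<le> 1"
proof -
  have "(\<integral>\<^sup>+D. Vr (\<pi>s, D) \<partial>measure_pmf (Pi_pmf ({..<N} \<times> {1..H}) []
             (\<lambda>(n, h). Plaw H (thstar n) (nu Act (Qc n h) h (\<pi>s n))))) =
        (\<Prod>x\<in>{..<N} \<times> {1..H}. nn_integral ((\<lambda>(n, h). Plaw H (thstar n) (nu Act (Qc n h) h (\<pi>s n))) x)
            (\<lambda>y. ennreal (wfac (fst x) (snd x) (\<pi>s (fst x)) y)))"
    unfolding Vr_def fst_conv snd_conv
    by (rule nn_integral_prod_Pi_pmf) simp
  also have "\<dots> \<le> 1"
  proof (rule prod_le_1)
    fix x assume x: "x \<in> {..<N} \<times> {1..H}"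
    obtain n h where xe: "x = (n, h)" by fastforce
    have "nn_integral ((\<lambda>(n, h). Plaw H (thstar n) (nu Act (Qc n h) h (\<pi>s n))) x)
            (\<lambda>y. ennreal (wfac (fst x) (snd x) (\<pi>s (fst x)) y)) \<le> 1"
      unfolding xe using x xe by (auto intro!: factor_exp fin gnn)
    then show "0 \<le> nn_integral ((\<lambda>(n, h). Plaw H (thstar n) (nu Act (Qc n h) h (\<pi>s n))) x)
            (\<lambda>y. ennreal (wfac (fst x) (snd x) (\<pi>s (fst x)) y)) \<and> nn_integral ((\<lambda>(n, h). Plaw H (thstar n) (nu Act (Qc n h) h (\<pi>s n))) x)
            (\<lambda>y. ennreal (wfac (fst x) (snd x) (\<pi>s (fst x)) y)) \<le> 1" by simp
  qed
  finally show ?thesis .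
qed

lemma run_exp:
  assumes fin: "finite Obs" "finite Act" and gnn: "\<And>n \<tau>. n < N \<Longrightarrow> \<tau> \<in> trajs Obs Act H \<Longrightarrow> 0 \<le> g n \<tau>"
  shows "(\<integral>\<^sup>+recs. Wr (take j recs) \<partial>measure_pmf (umt_run Act H N Qc Tu \<beta> sel thstar m)) \<le> 1"
proof (induction m)
  case 0
  then show ?case by (simp add: Wr_def)
next
  case (Suc m)
  let ?R = "umt_run Act H N Qc Tu \<beta> sel thstar m"
  let ?ps = "\<lambda>rs. sel (Bset Act H N Qc Tu \<beta> rs m)"
  let ?Pi = "\<lambda>rs. Pi_pmf ({..<N} \<times> {1..H}) [] (\<lambda>(n, h). Plaw H (thstar n) (nu Act (Qc n h) h (?ps rs n)))"
  have "(\<integral>\<^sup>+recs. Wr (take j recs) \<partial>measure_pmf (umt_run Act H N Qc Tu \<beta> sel thstar (Suc m))) =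
      (\<integral>\<^sup>+rs. (\<integral>\<^sup>+D. Wr (take j (rs @ [(?ps rs, D)])) \<partial>measure_pmf (?Pi rs)) \<partial>measure_pmf ?R)"
    by (simp add: Let_def)
  also have "\<dots> \<le> (\<integral>\<^sup>+rs. Wr (take j rs) \<partial>measure_pmf ?R)"
  proof (rule nn_integral_mono_AE, unfold AE_measure_pmf_iff, intro ballI)
    fix rs assume rs: "rs \<in> set_pmf ?R"
    have len: "length rs = m" using run_support[OF rs] by simp
    show "(\<integral>\<^sup>+D. Wr (take j (rs @ [(?ps rs, D)])) \<partial>measure_pmf (?Pi rs)) \<le> Wr (take j rs)"
    proof (cases "j \<le> m")
      case True
      then have "\<And>D. take j (rs @ [(?ps rs, D)]) = take j rs" using len by simp
      then show ?thesis by (simp add: measure_pmf.emeasure_space_1)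
    next
      case False
      then have "\<And>D. take j (rs @ [(?ps rs, D)]) = rs @ [(?ps rs, D)]" "take j rs = rs" using len by auto
      then have "(\<integral>\<^sup>+D. Wr (take j (rs @ [(?ps rs, D)])) \<partial>measure_pmf (?Pi rs)) =
          Wr rs * (\<integral>\<^sup>+D. Vr (?ps rs, D) \<partial>measure_pmf (?Pi rs))"
        by (simp add: Wr_append nn_integral_cmult)
      also have "\<dots> \<le> Wr rs * 1"
        by (intro mult_left_mono round_exp fin gnn) auto
      finally show ?thesis using \<open>take j rs = rs\<close> by simp
    qed
  qed
  also have "\<dots> \<le> 1" by (rule Suc.IH)
  finally show ?case .
qed

lemma run_markov:
  assumes fin: "finite Obs" "finite Act" and gnn: "\<And>n \<tau>. n < N \<Longrightarrow> \<tau> \<in> trajs Obs Act H \<Longrightarrow> 0 \<le> g n \<tau>"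
    and a: "0 < a"
  shows "emeasure (measure_pmf (umt_run Act H N Qc Tu \<beta> sel thstar m)) {recs. ennreal a \<le> Wr (take j recs)} \<le> ennreal (1 / a)"
proof -
  let ?M = "measure_pmf (umt_run Act H N Qc Tu \<beta> sel thstar m)"
  let ?u = "\<lambda>recs. Wr (take j recs)"
  have sub: "{recs. ennreal a \<le> ?u recs} \<subseteq> {x\<in>UNIV. 1 \<le> ennreal (1/a) * ?u x}"
  proof (rule subsetI)
    fix x assume "x \<in> {recs. ennreal a \<le> ?u recs}"
    then have "ennreal a \<le> ?u x" by simp
    then have "ennreal (1/a) * ennreal a \<le> ennreal (1/a) * ?u x" by (rule mult_left_mono) simp
    moreover have "ennreal (1/a) * ennreal a = 1" using a by (simp add: ennreal_mult[symmetric])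
    ultimately show "x \<in> {x\<in>UNIV. 1 \<le> ennreal (1/a) * ?u x}" by simp
  qed
  have "emeasure ?M {recs. ennreal a \<le> ?u recs} \<le> emeasure ?M {x\<in>UNIV. 1 \<le> ennreal (1/a) * ?u x}"
    by (rule emeasure_mono[OF sub]) simp
  also have "\<dots> \<le> ennreal (1/a) * (\<integral>\<^sup>+ x. ?u x * indicator UNIV x \<partial>?M)"
    by (rule nn_integral_Markov_inequality) auto
  also have "\<dots> \<le> ennreal (1/a) * 1"
    by (intro mult_left_mono) (use run_exp[OF fin gnn] in auto)
  finally show ?thesis by simp
qed

lemma term_bound:
  assumes fin: "finite Obs" "finite Act" "Act \<noteq> {}"
    and th: "th \<in> valid_models Obs" and pol: "\<pi> \<in> policies Act"
    and Q: "Qc n h \<subseteq> {q. length q = H - h \<and> set q \<subseteq> Act}"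
    and eta: "0 < \<eta>"
    and br: "\<And>\<pi>'. \<pi>' \<in> policies Act \<Longrightarrow> (\<Sum>\<tau>\<in>trajs Obs Act H. \<bar>l \<tau> - g n \<tau>\<bar> * polprob \<pi>' \<tau>) < \<eta>"
    and inb: "\<And>\<tau>. \<tau> \<in> trajs Obs Act H \<Longrightarrow> l \<tau> \<le> obsprob th \<tau> \<and> obsprob th \<tau> \<le> g n \<tau>"
    and Pt: "0 < pmf (Plaw H th (nu Act (Qc n h) h \<pi>)) \<tau>"
    and Ps: "0 < pmf (Plaw H (thstar n) (nu Act (Qc n h) h \<pi>)) \<tau>"
  shows "0 < wfac n h \<pi> \<tau>" and "DH2 Obs Act H (Plaw H th (nu Act (Qc n h) h \<pi>)) (Plaw H (thstar n) (nu Act (Qc n h) h \<pi>))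
     \<le> ln (wfac n h \<pi> \<tau>) + ln (pmf (Plaw H (thstar n) (nu Act (Qc n h) h \<pi>)) \<tau>) / 2
        - ln (pmf (Plaw H th (nu Act (Qc n h) h \<pi>)) \<tau>) / 2 + sqrt \<eta>"
proof -
  let ?T = "trajs Obs Act H"
  let ?nu = "nu Act (Qc n h) h \<pi>"
  let ?P = "\<lambda>x. pmf (Plaw H th ?nu) x"
  let ?S = "\<lambda>x. pmf (Plaw H (thstar n) ?nu) x"
  let ?G = "ghat n h \<pi>"
  have finT: "finite ?T" using fin(1,2) by (rule finite_trajs)
  have short: "\<And>hs ob. length hs < H \<Longrightarrow> set_pmf (?nu hs ob) \<subseteq> Act"
    by (rule nu_valid[OF fin(2,3) pol Q])
  have nutp: "nut Act H ?nu \<in> policies Act" by (rule nut_policy[OF fin(2,3) short])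
  have gnn: "0 \<le> g n x" if "x \<in> ?T" for x
    using inb[OF that] th by (smt (verit) obsprob_def pmf_nonneg prod_nonneg)
  have polnn: "0 \<le> polprob ?nu x" for x by (auto simp: polprob_def intro!: prod_nonneg)
  have Px: "?P x = obsprob th x * polprob ?nu x" if "x \<in> ?T" for x
    using that by (simp add: pmf_Plaw trajs_def)
  have Gx: "?G x = g n x * polprob ?nu x" if "x \<in> ?T" for x
    using that by (simp add: ghat_def)
  have PG: "?P x \<le> ?G x" if "x \<in> ?T" for x
    using Px[OF that] Gx[OF that] inb[OF that] polnn by (simp add: mult_right_mono)
  have sumS: "(\<Sum>x\<in>?T. ?S x) \<le> 1"
    using measure_measure_pmf_finite[OF finT, of "Plaw H (thstar n) ?nu"] measure_pmf.prob_le_1 by metis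
  have sumGP: "(\<Sum>x\<in>?T. ?G x - ?P x) \<le> \<eta>"
  proof -
    have "(\<Sum>x\<in>?T. ?G x - ?P x) \<le> (\<Sum>x\<in>?T. \<bar>l x - g n x\<bar> * polprob (nut Act H ?nu) x)"
    proof (rule sum_mono)
      fix x assume x: "x \<in> ?T"
      have "?G x - ?P x = (g n x - obsprob th x) * polprob ?nu x" using Px[OF x] Gx[OF x] by (simp add: algebra_simps)
      also have "\<dots> \<le> \<bar>l x - g n x\<bar> * polprob ?nu x"
        using inb[OF x] polnn by (intro mult_right_mono) auto
      also have "polprob ?nu x = polprob (nut Act H ?nu) x" using x by (simp add: polprob_nut trajs_def)
      finally show "?G x - ?P x \<le> \<bar>l x - g n x\<bar> * polprob (nut Act H ?nu) x" .
    qed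
    also have "\<dots> < \<eta>" by (rule br[OF nutp])
    finally show ?thesis by simp
  qed
  have F: "Fb n h \<pi> \<le> (\<Sum>x\<in>?T. sqrt (?P x * ?S x)) + sqrt \<eta>"
    unfolding Fb_def Pst_def
    by (rule hell_term[OF finT _ PG _ sumS sumGP eta]) auto
  have DH: "DH2 Obs Act H (Plaw H th ?nu) (Plaw H (thstar n) ?nu) \<le> 1 - Fb n h \<pi> + sqrt \<eta>"
    using F by (simp add: DH2_def)
  have tT: "\<tau> \<in> ?T"
    by (rule Plaw_pos_trajs[where \<pi>="?nu", OF th short]) (use Pt in auto)
  have Gpos: "0 < ?G \<tau>" using PG[OF tT] Pt by simp
  have lnw: "ln (wfac n h \<pi> \<tau>) = (ln (?G \<tau>) - ln (?S \<tau>)) / 2 + (1 - Fb n h \<pi>)"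
    unfolding wfac_def Pst_def using Gpos Ps
    by (simp add: ln_mult ln_sqrt ln_div)
  have lnPG: "ln (?P \<tau>) \<le> ln (?G \<tau>)" using PG[OF tT] Pt by simp
  have "1 - Fb n h \<pi> + sqrt \<eta> \<le> ln (wfac n h \<pi> \<tau>) + ln (?S \<tau>) / 2 - ln (?P \<tau>) / 2 + sqrt \<eta>"
    unfolding lnw using lnPG by (simp add: field_simps)
  then show "DH2 Obs Act H (Plaw H th (nu Act (Qc n h) h \<pi>)) (Plaw H (thstar n) (nu Act (Qc n h) h \<pi>))
     \<le> ln (wfac n h \<pi> \<tau>) + ln (pmf (Plaw H (thstar n) (nu Act (Qc n h) h \<pi>)) \<tau>) / 2
        - ln (pmf (Plaw H th (nu Act (Qc n h) h \<pi>)) \<tau>) / 2 + sqrt \<eta>" using DH by (rule_tac order.trans)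
  show "0 < wfac n h \<pi> \<tau>" unfolding wfac_def Pst_def using Gpos Ps by simp
qed

end



lemma Wr_nth: "Wr Obs Act H N Qc thstar g xs = (\<Prod>t<length xs. Vr Obs Act H N Qc thstar g (xs!t))"
  unfolding Wr_def prod.list_conv_set_nth by (simp add: atLeast0LessThan)

lemma det:
  assumes fin: "finite Obs" "finite Act" "Act \<noteq> {}"
    and Th: "Th \<subseteq> valid_models Obs" and Tu: "Tu \<subseteq> model_tuples Th N" and ts: "thstar \<in> Tu"
    and Qc: "\<forall>n<N. \<forall>h\<in>{1..H}. Qc n h \<subseteq> {q. length q = H - h \<and> set q \<subseteq> Act}"
    and sel: "\<And>B. sel B \<in> policy_tuples Act N"
    and eta: "0 < \<eta>" and etab: "real N * real K * real H * sqrt \<eta> \<le> 1"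
    and br: "\<forall>i<N. \<forall>\<pi>'\<in>policies Act. (\<Sum>\<tau>\<in>trajs Obs Act H. \<bar>l i \<tau> - g i \<tau>\<bar> * polprob \<pi>' \<tau>) < \<eta>"
    and inb: "\<forall>i<N. \<forall>\<tau>\<in>trajs Obs Act H. l i \<tau> \<le> obsprob (\<theta> i) \<tau> \<and> obsprob (\<theta> i) \<tau> \<le> g i \<tau>"
    and th: "\<theta> \<in> Bset Act H N Qc Tu \<beta> recs (Suc j')"
    and recs: "recs \<in> set_pmf (umt_run Act H N Qc Tu \<beta> sel thstar K)"
    and jK: "Suc j' \<le> K"
    and W: "Wr Obs Act H N Qc thstar g (take (Suc j') recs) < ennreal a"
  shows "(\<Sum>n<N. \<Sum>t<Suc j'. \<Sum>h\<in>{1..H}.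
             DH2 Obs Act H (Plaw H (\<theta> n) (nu Act (Qc n h) h (fst (recs ! t) n)))
                       (Plaw H (thstar n) (nu Act (Qc n h) h (fst (recs ! t) n))))
          \<le> ln a + \<beta> / 2 + 1"
proof -
  define j where "j = Suc j'"
  define rs where "rs = take j recs"
  define nv where "nv = (\<lambda>n h t. nu Act (Qc n h) h (fst (recs ! t) n))"
  define tau where "tau = (\<lambda>n h t. snd (recs ! t) (n, h))"
  note supp = run_support[OF recs]
  have lenrs: "length rs = j" using supp jK by (simp add: rs_def j_def)
  have rsn: "rs ! t = recs ! t" if "t < j" for t using that by (simp add: rs_def)
  have thTu: "\<theta> \<in> Tu" and LL: "loglik Act H N Qc \<theta> rs \<ge> (SUP \<theta>'\<in>Tu. loglik Act H N Qc \<theta>' rs) - ereal \<beta>"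
    using th by (auto simp: rs_def j_def)
  have thv: "\<theta> n \<in> valid_models Obs" if "n < N" for n
    using thTu Tu Th that by (auto simp: model_tuples_def)
  have polt: "fst (recs ! t) n \<in> policies Act" if tj: "t < j" "n < N" for t n
  proof -
    have "t < length recs" using supp tj jK by (simp add: j_def)
    then obtain B where "fst (recs ! t) = sel B" using supp by blast
    then show ?thesis using sel[of B] tj by (auto simp: policy_tuples_def)
  qed
  have Ps: "0 < pmf (Plaw H (thstar n) (nv n h t)) (tau n h t)" if "t < j" "n < N" "h \<in> {1..H}" for t n h
    using supp that jK by (auto simp: nv_def tau_def j_def intro!: pmf_positive)
  define Ls where "Ls = (\<Sum>t<j. \<Sum>n<N. \<Sum>h\<in>{1..H}. ln (pmf (Plaw H (thstar n) (nv n h t)) (tau n h t)))"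
  define Lt where "Lt = (\<Sum>t<j. \<Sum>n<N. \<Sum>h\<in>{1..H}. ln (pmf (Plaw H (\<theta> n) (nv n h t)) (tau n h t)))"
  have lls: "loglik Act H N Qc thstar rs = ereal Ls"
    unfolding Ls_def
    by (subst loglik_eq) (use Ps in \<open>auto simp: lenrs rsn nv_def tau_def\<close>)
  have "loglik Act H N Qc thstar rs \<le> (SUP \<theta>'\<in>Tu. loglik Act H N Qc \<theta>' rs)"
    by (rule SUP_upper[OF ts])
  then have LL2: "ereal (Ls - \<beta>) \<le> loglik Act H N Qc \<theta> rs"
  proof -
    have "ereal Ls - ereal \<beta> \<le> (SUP \<theta>'\<in>Tu. loglik Act H N Qc \<theta>' rs) - ereal \<beta>"
      using \<open>loglik Act H N Qc thstar rs \<le> _\<close> lls by (intro ereal_minus_mono) auto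
    then show ?thesis using LL by simp
  qed
  then have "loglik Act H N Qc \<theta> rs \<noteq> -\<infinity>" by auto
  then have Pt: "0 < pmf (Plaw H (\<theta> n) (nv n h t)) (tau n h t)" if "t < j" "n < N" "h \<in> {1..H}" for t n h
    using loglik_pos[of Act H N Qc \<theta> rs t n h] that by (simp add: lenrs rsn nv_def tau_def)
  have llt: "loglik Act H N Qc \<theta> rs = ereal Lt"
    unfolding Lt_def
    by (subst loglik_eq) (use Pt in \<open>auto simp: lenrs rsn nv_def tau_def\<close>)
  have LtLs: "Ls - \<beta> \<le> Lt" using LL2 llt by simp
  have TB: "0 < wfac Obs Act H Qc thstar g n h (fst (recs ! t) n) (tau n h t) \<and>
      DH2 Obs Act H (Plaw H (\<theta> n) (nv n h t)) (Plaw H (thstar n) (nv n h t))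
     \<le> ln (wfac Obs Act H Qc thstar g n h (fst (recs ! t) n) (tau n h t)) + ln (pmf (Plaw H (thstar n) (nv n h t)) (tau n h t)) / 2
        - ln (pmf (Plaw H (\<theta> n) (nv n h t)) (tau n h t)) / 2 + sqrt \<eta>"
    if "t < j" "n < N" "h \<in> {1..H}" for t n h
  proof -
    note tb = term_bound[where Obs=Obs and Act=Act and H=H and Qc=Qc and thstar=thstar and g=g
      and th="\<theta> n" and \<pi>="fst (recs ! t) n" and n=n and h=h and \<eta>=\<eta> and l="l n" and \<tau>="tau n h t"]
    have Qn: "Qc n h \<subseteq> {q. length q = H - h \<and> set q \<subseteq> Act}" using Qc that by auto
    have brn: "\<And>\<pi>'. \<pi>' \<in> policies Act \<Longrightarrow> (\<Sum>\<tau>\<in>trajs Obs Act H. \<bar>l n \<tau> - g n \<tau>\<bar> * polprob \<pi>' \<tau>) < \<eta>"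
      using br that by auto
    have inbn: "\<And>\<tau>. \<tau> \<in> trajs Obs Act H \<Longrightarrow> l n \<tau> \<le> obsprob (\<theta> n) \<tau> \<and> obsprob (\<theta> n) \<tau> \<le> g n \<tau>"
      using inb that by auto
    have p1: "0 < pmf (Plaw H (\<theta> n) (nu Act (Qc n h) h (fst (recs ! t) n))) (tau n h t)"
      using Pt[OF that] by (simp add: nv_def)
    have p2: "0 < pmf (Plaw H (thstar n) (nu Act (Qc n h) h (fst (recs ! t) n))) (tau n h t)"
      using Ps[OF that] by (simp add: nv_def)
    show ?thesis
      using tb(1)[OF fin thv[OF that(2)] polt[OF that(1,2)] Qn eta brn inbn p1 p2]
        tb(2)[OF fin thv[OF that(2)] polt[OF that(1,2)] Qn eta brn inbn p1 p2]
      by (simp add: nv_def)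
  qed
  define SW where "SW = (\<Sum>t<j. \<Sum>n<N. \<Sum>h\<in>{1..H}. ln (wfac Obs Act H Qc thstar g n h (fst (recs ! t) n) (tau n h t)))"
  have "(\<Sum>n<N. \<Sum>t<j. \<Sum>h\<in>{1..H}. DH2 Obs Act H (Plaw H (\<theta> n) (nv n h t)) (Plaw H (thstar n) (nv n h t)))
      = (\<Sum>t<j. \<Sum>n<N. \<Sum>h\<in>{1..H}. DH2 Obs Act H (Plaw H (\<theta> n) (nv n h t)) (Plaw H (thstar n) (nv n h t)))"
    by (rule sum.swap)
  also have "\<dots> \<le> (\<Sum>t<j. \<Sum>n<N. \<Sum>h\<in>{1..H}. ln (wfac Obs Act H Qc thstar g n h (fst (recs ! t) n) (tau n h t)) + ln (pmf (Plaw H (thstar n) (nv n h t)) (tau n h t)) / 2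
        - ln (pmf (Plaw H (\<theta> n) (nv n h t)) (tau n h t)) / 2 + sqrt \<eta>)"
    by (intro sum_mono) (use TB in auto)
  also have "\<dots> = SW + Ls / 2 - Lt / 2 + real j * real N * real H * sqrt \<eta>"
    by (simp add: SW_def Ls_def Lt_def sum.distrib sum_subtractf sum_divide_distrib)
  finally have S1: "(\<Sum>n<N. \<Sum>t<j. \<Sum>h\<in>{1..H}. DH2 Obs Act H (Plaw H (\<theta> n) (nv n h t)) (Plaw H (thstar n) (nv n h t)))
     \<le> SW + Ls / 2 - Lt / 2 + real j * real N * real H * sqrt \<eta>" .
  have "real j * real N * real H * sqrt \<eta> \<le> real K * real N * real H * sqrt \<eta>"
    using jK eta by (intro mult_right_mono) (auto simp: j_def)
  then have S2: "real j * real N * real H * sqrt \<eta> \<le> 1" using etab by (simp add: mult_ac)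
  define Pw where "Pw = (\<Prod>t<j. \<Prod>x\<in>{..<N} \<times> {1..H}. wfac Obs Act H Qc thstar g (fst x) (snd x) (fst (recs ! t) (fst x)) (snd (recs ! t) x))"
  have wpos: "0 < wfac Obs Act H Qc thstar g (fst x) (snd x) (fst (recs ! t) (fst x)) (snd (recs ! t) x)" if "t < j" "x \<in> {..<N} \<times> {1..H}" for t x
    using TB[OF that(1), of "fst x" "snd x"] that by (auto simp: tau_def)
  have "Wr Obs Act H N Qc thstar g rs = (\<Prod>t<j. Vr Obs Act H N Qc thstar g (recs ! t))" by (simp add: Wr_nth lenrs rsn)
  also have "\<dots> = ennreal Pw"
    unfolding Pw_def Vr_def
    by (subst prod_ennreal[symmetric]; (intro prod_nonneg)?) (use wpos in \<open>auto intro!: prod.cong prod_ennreal less_imp_le\<close>)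
  finally have "ennreal Pw < ennreal a" using W by (simp add: rs_def j_def)
  moreover have Pwpos: "0 < Pw" unfolding Pw_def using wpos by (auto intro!: prod_pos)
  ultimately have "Pw < a" by (simp add: ennreal_less_iff)
  then have "ln Pw < ln a" using Pwpos by simp
  moreover have "ln Pw = SW"
  proof -
    have "ln Pw = (\<Sum>t<j. ln (\<Prod>x\<in>{..<N} \<times> {1..H}. wfac Obs Act H Qc thstar g (fst x) (snd x) (fst (recs ! t) (fst x)) (snd (recs ! t) x)))"
      unfolding Pw_def using wpos by (subst ln_prod) (auto intro!: prod_pos simp: less_imp_neq[symmetric])
    also have "\<dots> = (\<Sum>t<j. \<Sum>x\<in>{..<N} \<times> {1..H}. ln (wfac Obs Act H Qc thstar g (fst x) (snd x) (fst (recs ! t) (fst x)) (snd (recs ! t) x)))"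
      using wpos by (intro sum.cong refl ln_prod) (auto simp: less_imp_neq[symmetric])
    also have "\<dots> = SW"
      unfolding SW_def tau_def by (intro sum.cong refl) (simp add: sum.cartesian_product case_prod_unfold)
    finally show ?thesis .
  qed
  ultimately have "SW < ln a" by simp
  then show ?thesis using S1 S2 LtLs by (simp add: j_def nv_def)
qed


lemma ln2_half: "1/2 < ln (2::real)"
proof -
  have "exp (1/2::real) * exp (1/2) = exp 1" by (simp add: exp_add[symmetric])
  also have "\<dots> \<le> 3" by (rule exp_le)
  finally have e3: "exp (1/2::real) * exp (1/2) \<le> 3" .
  have "exp (1/2::real) < 2"
  proof (rule ccontr)
    assume "\<not> exp (1/2::real) < 2"
    then have e2: "2 \<le> exp (1/2::real)" by simp
    have "(2::real) * 2 \<le> exp (1/2) * exp (1/2)"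
      by (rule mult_mono[OF e2 e2]) auto
    with e3 show False by simp
  qed
  then show ?thesis by (metis exp_less_cancel_iff exp_ln zero_less_numeral)
qed

theorem lemma1:
  "\<exists>c>0. \<forall>(Obs::nat set) (Act::nat set) (H::nat) (N::nat) (K::nat) (Th::model set)
      (Tu::(nat \<Rightarrow> model) set) (thstar::nat \<Rightarrow> model) (Qc::nat \<Rightarrow> nat \<Rightarrow> nat list set)
      (sel::(nat \<Rightarrow> model) set \<Rightarrow> (nat \<Rightarrow> policy)) (\<eta>::real) (\<delta>::real).
    finite Obs \<and> Obs \<noteq> {} \<and> finite Act \<and> Act \<noteq> {} \<and> 1 \<le> H \<and> 1 \<le> N \<and> 1 \<le> K \<and>
    Th \<subseteq> valid_models Obs \<and>
    Tu \<subseteq> model_tuples Th N \<and> thstar \<in> Tu \<and>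
    (\<forall>n<N. \<forall>h\<in>{1..H}. Qc n h \<noteq> {} \<and> Qc n h \<subseteq> {q. length q = H - h \<and> set q \<subseteq> Act}) \<and>
    valid_selection Obs Act H N sel \<and>
    0 < \<eta> \<and> \<eta> \<le> 1 / (real N ^ 2 * real K ^ 2 * real H ^ 2) \<and>
    0 < \<delta> \<and> \<delta> < 1 \<and>
    (\<exists>m. bracket_cover Obs Act H N \<eta> Tu m)
    \<longrightarrow>
    (let \<beta> = c * ln (real (bracketing_number Obs Act H N \<eta> Tu) * real N * real K * real H / \<delta>) in
     measure_pmf.prob (umt_run Act H N Qc Tu \<beta> sel thstar K)
       {recs. \<forall>k\<in>{1..K}. \<forall>\<theta>\<in>Bset Act H N Qc Tu \<beta> recs (k - 1).
          (\<Sum>n<N. \<Sum>t<k - 1. \<Sum>h\<in>{1..H}.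
             DH2 Obs Act H (Plaw H (\<theta> n) (nu Act (Qc n h) h (fst (recs ! t) n)))
                       (Plaw H (thstar n) (nu Act (Qc n h) h (fst (recs ! t) n))))
          \<le> 2 * \<beta>}
     \<ge> 1 - \<delta>)"
proof (intro exI[of _ "2::real"] conjI allI impI)
  show "(0::real) < 2" by simp
next
  fix Obs Act :: "nat set" and H N K :: nat and Th :: "model set" and Tu :: "(nat \<Rightarrow> model) set"
    and thstar :: "nat \<Rightarrow> model" and Qc :: "nat \<Rightarrow> nat \<Rightarrow> nat list set"
    and sel :: "(nat \<Rightarrow> model) set \<Rightarrow> (nat \<Rightarrow> policy)" and \<eta> \<delta> :: real
  assume A: "finite Obs \<and> Obs \<noteq> {} \<and> finite Act \<and> Act \<noteq> {} \<and> 1 \<le> H \<and> 1 \<le> N \<and> 1 \<le> K \<and>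
    Th \<subseteq> valid_models Obs \<and>
    Tu \<subseteq> model_tuples Th N \<and> thstar \<in> Tu \<and>
    (\<forall>n<N. \<forall>h\<in>{1..H}. Qc n h \<noteq> {} \<and> Qc n h \<subseteq> {q. length q = H - h \<and> set q \<subseteq> Act}) \<and>
    valid_selection Obs Act H N sel \<and>
    0 < \<eta> \<and> \<eta> \<le> 1 / (real N ^ 2 * real K ^ 2 * real H ^ 2) \<and>
    0 < \<delta> \<and> \<delta> < 1 \<and>
    (\<exists>m. bracket_cover Obs Act H N \<eta> Tu m)"
  have finO: "finite Obs" and finA: "finite Act" and neA: "Act \<noteq> {}" and H1: "1 \<le> H" and N1: "1 \<le> N"
    and K1: "1 \<le> K" and Th: "Th \<subseteq> valid_models Obs" and Tu: "Tu \<subseteq> model_tuples Th N" and ts: "thstar \<in> Tu"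
    and Qc: "\<forall>n<N. \<forall>h\<in>{1..H}. Qc n h \<subseteq> {q. length q = H - h \<and> set q \<subseteq> Act}"
    and vs: "valid_selection Obs Act H N sel" and eta: "0 < \<eta>"
    and etab: "\<eta> \<le> 1 / (real N ^ 2 * real K ^ 2 * real H ^ 2)"
    and d0: "0 < \<delta>" and d1: "\<delta> < 1" and cov: "\<exists>m. bracket_cover Obs Act H N \<eta> Tu m"
    using A by auto
  have sel: "\<And>B. sel B \<in> policy_tuples Act N" using vs by (simp add: valid_selection_def)
  define Nb where "Nb = bracketing_number Obs Act H N \<eta> Tu"
  have covNb: "bracket_cover Obs Act H N \<eta> Tu Nb"
    unfolding Nb_def bracketing_number_def using cov by (rule LeastI_ex)
  obtain brs where brs: "length brs = Nb" "\<forall>b\<in>set brs. is_eta_bracket Obs Act H N \<eta> b"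
    "\<forall>\<theta>\<in>Tu. \<exists>b\<in>set brs. in_bracket Obs Act H N b \<theta>"
    using covNb unfolding bracket_cover_def by blast
  have "set brs \<noteq> {}" using brs(3) ts by auto
  then have Nb1: "1 \<le> Nb" using brs(1) by (cases brs) auto
  define L0 where "L0 = ln (real Nb * real N * real K * real H / \<delta>)"
  define \<beta> where "\<beta> = 2 * L0"
  have "1 * 1 * 1 * 1 \<le> Nb * N * K * H"
    using Nb1 N1 K1 H1 by (intro mult_le_mono) auto
  then have "real 1 \<le> real (Nb * N * K * H)" by (simp only: of_nat_le_iff)
  then have prod1: "1 \<le> real Nb * real N * real K * real H" by simp
  have arg1: "1 < real Nb * real N * real K * real H / \<delta>"
    using prod1 d0 d1 by (simp add: less_divide_eq)
  have L0pos: "0 < L0" unfolding L0_def using arg1 by simp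
  define a where "a = real Nb * real K / \<delta>"
  have apos: "0 < a" unfolding a_def using Nb1 K1 d0 by simp
  have lna: "ln a \<le> L0"
  proof -
    have "1 * 1 \<le> N * H" using N1 H1 by (intro mult_le_mono) auto
    then have "real 1 \<le> real (N * H)" by (simp only: of_nat_le_iff mult_1)
    then have NH: "1 \<le> real N * real H" by simp
    have "real Nb * real K * 1 \<le> real Nb * real K * (real N * real H)"
      using NH by (intro mult_left_mono) auto
    then have "real Nb * real K \<le> real Nb * real N * real K * real H" by (simp add: mult_ac)
    then have "a \<le> real Nb * real N * real K * real H / \<delta>"
      unfolding a_def using d0 by (simp add: divide_right_mono)
    then show ?thesis unfolding L0_def using apos by simp
  qed
  have etab2: "real N * real K * real H * sqrt \<eta> \<le> 1"
  proof -
    have "sqrt \<eta> \<le> sqrt (1 / (real N * real K * real H) ^ 2)"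
      using etab by (simp add: power_mult_distrib)
    also have "\<dots> = 1 / (real N * real K * real H)" by (simp add: real_sqrt_divide)
    finally show ?thesis using N1 K1 H1 by (simp add: field_simps)
  qed
  let ?R = "umt_run Act H N Qc Tu \<beta> sel thstar K"
  let ?I = "set brs \<times> {..<K}"
  define S where "S = (\<lambda>p::((nat \<Rightarrow> hist \<Rightarrow> real) \<times> (nat \<Rightarrow> hist \<Rightarrow> real)) \<times> nat.
      {recs. ennreal a \<le> Wr Obs Act H N Qc thstar (snd (fst p)) (take (snd p) recs)})"
  define Bad where "Bad = (\<Union>p\<in>?I. S p)"
  have gnn: "\<And>n \<tau>. n < N \<Longrightarrow> \<tau> \<in> trajs Obs Act H \<Longrightarrow> 0 \<le> snd b n \<tau>" if "b \<in> set brs" for b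
    using brs(2) that by (auto simp: is_eta_bracket_def)
  have emB: "emeasure (measure_pmf ?R) Bad \<le> ennreal \<delta>"
  proof -
    have "emeasure (measure_pmf ?R) Bad \<le> (\<Sum>p\<in>?I. emeasure (measure_pmf ?R) (S p))"
      unfolding Bad_def by (rule emeasure_subadditive_finite) auto
    also have "\<dots> \<le> (\<Sum>p\<in>?I. ennreal (1 / a))"
    proof (rule sum_mono)
      fix p assume p: "p \<in> ?I"
      show "emeasure (measure_pmf ?R) (S p) \<le> ennreal (1 / a)"
        unfolding S_def by (rule run_markov[OF finO finA gnn[of "fst p"] apos]) (use p in auto)
    qed
    also have "\<dots> = ennreal (\<Sum>p\<in>?I. 1 / a)"
      by (rule sum_ennreal) (use apos in simp)
    also have "\<dots> = ennreal (real (card ?I) * (1 / a))"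
      by simp
    also have "\<dots> \<le> ennreal \<delta>"
    proof -
      have "card ?I \<le> Nb * K" using brs(1) card_length[of brs] by (simp add: card_cartesian_product)
      then have "real (card ?I) \<le> real Nb * real K" by (metis of_nat_le_iff of_nat_mult)
      then have "real (card ?I) * (1 / a) \<le> real Nb * real K * (1 / a)"
        using apos by (intro mult_right_mono) auto
      also have "\<dots> = \<delta>" unfolding a_def using Nb1 K1 d0 by simp
      finally show ?thesis by (rule ennreal_leI)
    qed
    finally show ?thesis .
  qed
  have prB: "measure_pmf.prob ?R Bad \<le> \<delta>"
    using emB d0 by (simp add: measure_pmf.emeasure_eq_measure)
  define G where "G = {recs. \<forall>k\<in>{1..K}. \<forall>\<theta>\<in>Bset Act H N Qc Tu \<beta> recs (k - 1).
          (\<Sum>n<N. \<Sum>t<k - 1. \<Sum>h\<in>{1..H}.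
             DH2 Obs Act H (Plaw H (\<theta> n) (nu Act (Qc n h) h (fst (recs ! t) n)))
                       (Plaw H (thstar n) (nu Act (Qc n h) h (fst (recs ! t) n))))
          \<le> 2 * \<beta>}"
  have sub: "set_pmf ?R - Bad \<subseteq> G"
  proof
    fix recs assume r: "recs \<in> set_pmf ?R - Bad"
    show "recs \<in> G" unfolding G_def
    proof (intro CollectI ballI)
      fix k \<theta> assume k: "k \<in> {1..K}" and th: "\<theta> \<in> Bset Act H N Qc Tu \<beta> recs (k - 1)"
      show "(\<Sum>n<N. \<Sum>t<k - 1. \<Sum>h\<in>{1..H}.
             DH2 Obs Act H (Plaw H (\<theta> n) (nu Act (Qc n h) h (fst (recs ! t) n)))
                       (Plaw H (thstar n) (nu Act (Qc n h) h (fst (recs ! t) n))))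
          \<le> 2 * \<beta>"
      proof (cases "k - 1")
        case 0
        then show ?thesis using L0pos by (simp add: \<beta>_def)
      next
        case (Suc j')
        have jK2: "Suc j' < K" using k Suc by auto
        then have jK: "Suc j' \<le> K" by simp
        have K2: "2 \<le> K" using k Suc by auto
        have thTu: "\<theta> \<in> Tu" using th Suc by simp
        obtain b where b: "b \<in> set brs" "in_bracket Obs Act H N b \<theta>" using brs(3) thTu by blast
        have bb: "is_eta_bracket Obs Act H N \<eta> b" using brs(2) b(1) by blast
        have "(b, Suc j') \<in> ?I" using b jK2 by auto
        then have "recs \<notin> S (b, Suc j')" using r unfolding Bad_def by blast
        then have W: "Wr Obs Act H N Qc thstar (snd b) (take (Suc j') recs) < ennreal a"
          unfolding S_def by auto
        have D: "(\<Sum>n<N. \<Sum>t<Suc j'. \<Sum>h\<in>{1..H}.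
             DH2 Obs Act H (Plaw H (\<theta> n) (nu Act (Qc n h) h (fst (recs ! t) n)))
                       (Plaw H (thstar n) (nu Act (Qc n h) h (fst (recs ! t) n))))
          \<le> ln a + \<beta> / 2 + 1"
          by (rule det[OF finO finA neA Th Tu ts Qc sel eta etab2, of "fst b" "snd b"])
             (use bb b(2) th Suc r jK W in \<open>auto simp: is_eta_bracket_def in_bracket_def\<close>)
        have "1 * 1 * 2 * 1 \<le> Nb * N * K * H"
          using Nb1 N1 K2 H1 by (intro mult_le_mono) auto
        then have "real 2 \<le> real (Nb * N * K * H)" by (simp only: of_nat_le_iff mult_1 mult_1_right)
        then have "2 \<le> real Nb * real N * real K * real H" by simp
        then have X2: "2 \<le> real Nb * real N * real K * real H" .
        have "real Nb * real N * real K * real H * \<delta> < real Nb * real N * real K * real H * 1"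
          by (rule mult_strict_left_mono) (use d1 X2 in auto)
        then have "real Nb * real N * real K * real H < real Nb * real N * real K * real H / \<delta>"
          using d0 by (simp add: less_divide_eq)
        then have "2 < real Nb * real N * real K * real H / \<delta>" using X2 by linarith
        then have "ln 2 < L0" unfolding L0_def by simp
        then have "1 \<le> 2 * L0" using ln2_half by simp
        then show ?thesis using D Suc lna by (simp add: \<beta>_def)
      qed
    qed
  qed
  have "measure_pmf.prob ?R (UNIV - G) \<le> measure_pmf.prob ?R (Bad \<union> (UNIV - set_pmf ?R))"
    using sub by (intro measure_pmf.finite_measure_mono) auto
  also have "\<dots> \<le> measure_pmf.prob ?R Bad + measure_pmf.prob ?R (UNIV - set_pmf ?R)"
    by (rule measure_Un_le) auto
  also have "measure_pmf.prob ?R (UNIV - set_pmf ?R) = 0"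
    by (simp add: measure_pmf_zero_iff)
  finally have "measure_pmf.prob ?R (UNIV - G) \<le> \<delta>" using prB by simp
  moreover have "measure_pmf.prob ?R (UNIV - G) = 1 - measure_pmf.prob ?R G"
    using measure_pmf.prob_compl[of G "?R"] by simp
  ultimately have "1 - \<delta> \<le> measure_pmf.prob ?R G" by simp
  then show "let \<beta> = 2 * ln (real (bracketing_number Obs Act H N \<eta> Tu) * real N * real K * real H / \<delta>) in
     measure_pmf.prob (umt_run Act H N Qc Tu \<beta> sel thstar K)
       {recs. \<forall>k\<in>{1..K}. \<forall>\<theta>\<in>Bset Act H N Qc Tu \<beta> recs (k - 1).
          (\<Sum>n<N. \<Sum>t<k - 1. \<Sum>h\<in>{1..H}.
             DH2 Obs Act H (Plaw H (\<theta> n) (nu Act (Qc n h) h (fst (recs ! t) n)))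
                       (Plaw H (thstar n) (nu Act (Qc n h) h (fst (recs ! t) n))))
          \<le> 2 * \<beta>}
     \<ge> 1 - \<delta>"
    unfolding Let_def G_def \<beta>_def L0_def Nb_def by simp
qed

end
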